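(* Let $e\ge3$ be odd, $m\in\mathbb N$, $t\in\{0,1\}$, and $\mathbf c=(t+(1-e)/2,0)$. Then the vertex $|(\emptyset,1^m),\mathbf c\rangle$ of the crystal graph $\mathcal G_{\mathbf c,e}$ is a highest weight vertex if and only if $e\mid 2m+t$ or $e\mid 2m+t-1$.
   Context: Crystal graph $\mathcal G_{\mathbf c,e}$ for $\mathbf c=(c_1,c_2)\in\mathbb Z^2$: vertices are $|\mu,\mathbf c\rangle$ for all bipartitions $\mu=(\mu^1,\mu^2)$. A node of $\mu$ is $(a,b,j)$ with $(a,b)$ (row $a$, column $b$) in the Young diagram of $\mu^j$; content $b-a+c_j$, residue = content mod $e$. A node $\gamma$ is addable (resp. removable) if $\mu\cup\{\gamma\}$ (resp. $\mu\setminus\{\gamma\}$) is a bipartition. For $i\in\{0,\dots,e-1\}$ order the addable and removable $i$-nodes by $\gamma\prec\gamma'$ iff $\mathrm{cont}(\gamma)<\mathrm{cont}(\gamma')$ or contents equal and $j>j'$; write them in increasing order as a word in $A$ (addable), $R$ (removable), and delete recursively consecutive $RA$, giving $A^\alpha R^\beta$; if $\alpha>0$, the good addable $i$-node is that of the rightmost $A$. Edge $|\mu,\mathbf c\rangle\xrightarrow{i}|\nu,\mathbf c\rangle$ iff $\nu$ is $\mu$ plus its good addable $i$-node. A highest weight vertex is a vertex with no incoming edges. *)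

theory Defs
  imports Main "HOL-Library.Product_Lexorder"
begin

definition is_partition :: "nat list \<Rightarrow> bool" where
  "is_partition l \<longleftrightarrow> sorted_wrt (\<ge>) l \<and> 0 \<notin> set l"

type_synonym bipartition = "nat list \<times> nat list"

definition is_bipartition :: "bipartition \<Rightarrow> bool" where
  "is_bipartition \<mu> \<longleftrightarrow> is_partition (fst \<mu>) \<and> is_partition (snd \<mu>)"

definition diagram :: "nat list \<Rightarrow> (nat \<times> nat) set" where
  "diagram l = {(a, b). 1 \<le> a \<and> a \<le> length l \<and> 1 \<le> b \<and> b \<le> l ! (a - 1)}"

type_synonym node = "nat \<times> nat \<times> nat"

definition nodes :: "bipartition \<Rightarrow> node set" where
  "nodes \<mu> = {(a, b, 1) | a b. (a, b) \<in> diagram (fst \<mu>)}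
           \<union> {(a, b, 2) | a b. (a, b) \<in> diagram (snd \<mu>)}"

definition addable :: "bipartition \<Rightarrow> node \<Rightarrow> bool" where
  "addable \<mu> \<gamma> \<longleftrightarrow> \<gamma> \<notin> nodes \<mu> \<and>
     (\<exists>\<nu>. is_bipartition \<nu> \<and> nodes \<nu> = nodes \<mu> \<union> {\<gamma>})"

definition removable :: "bipartition \<Rightarrow> node \<Rightarrow> bool" where
  "removable \<mu> \<gamma> \<longleftrightarrow> \<gamma> \<in> nodes \<mu> \<and>
     (\<exists>\<nu>. is_bipartition \<nu> \<and> nodes \<nu> = nodes \<mu> - {\<gamma>})"

definition content :: "int \<times> int \<Rightarrow> node \<Rightarrow> int" where
  "content c \<gamma> = (case \<gamma> of (a, b, j) \<Rightarrow>
      int b - int a + (if j = 1 then fst c else snd c))"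

definition residue :: "int \<times> int \<Rightarrow> nat \<Rightarrow> node \<Rightarrow> int" where
  "residue c e \<gamma> = content c \<gamma> mod int e"

text \<open>The addable and removable i-nodes listed in increasing order for
  \<gamma> \<prec> \<gamma>' iff cont < cont' or (cont = cont' and j > j'); the remaining
  components only break ties that cannot occur. True = A, False = R.\<close>
definition i_word :: "int \<times> int \<Rightarrow> nat \<Rightarrow> bipartition \<Rightarrow> nat \<Rightarrow> (node \<times> bool) list" where
  "i_word c e \<mu> i =
     map (\<lambda>(k, nj, \<gamma>, isA). (\<gamma>, isA))
       (sorted_list_of_set
         {(content c \<gamma>, - int (snd (snd \<gamma>)), \<gamma>, addable \<mu> \<gamma>) | \<gamma>.
            (addable \<mu> \<gamma> \<or> removable \<mu> \<gamma>) \<and> residue c e \<gamma> = int i})"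

fun cancel1 :: "(node \<times> bool) list \<Rightarrow> (node \<times> bool) list option" where
  "cancel1 (x # y # xs) =
     (if \<not> snd x \<and> snd y then Some xs else map_option (Cons x) (cancel1 (y # xs)))"
| "cancel1 _ = None"

lemma cancel1_length: "cancel1 w = Some w' \<Longrightarrow> length w' < length w"
  by (induction w arbitrary: w' rule: cancel1.induct) (auto split: if_splits)

function reduce_word :: "(node \<times> bool) list \<Rightarrow> (node \<times> bool) list" where
  "reduce_word w = (case cancel1 w of None \<Rightarrow> w | Some w' \<Rightarrow> reduce_word w')"
  by pat_completeness auto
termination
  by (relation "measure length") (auto dest: cancel1_length)

definition good_addable :: "int \<times> int \<Rightarrow> nat \<Rightarrow> bipartition \<Rightarrow> nat \<Rightarrow> node option" where
  "good_addable c e \<mu> i =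
     (let r = reduce_word (i_word c e \<mu> i) in
      if filter snd r = [] then None else Some (fst (last (filter snd r))))"

definition crystal_edge ::
  "int \<times> int \<Rightarrow> nat \<Rightarrow> bipartition \<Rightarrow> nat \<Rightarrow> bipartition \<Rightarrow> bool" where
  "crystal_edge c e \<mu> i \<nu> \<longleftrightarrow> is_bipartition \<mu> \<and> is_bipartition \<nu> \<and> i < e \<and>
     (\<exists>\<gamma>. good_addable c e \<mu> i = Some \<gamma> \<and> nodes \<nu> = nodes \<mu> \<union> {\<gamma>})"

definition highest_weight :: "int \<times> int \<Rightarrow> nat \<Rightarrow> bipartition \<Rightarrow> bool" where
  "highest_weight c e \<nu> \<longleftrightarrow> is_bipartition \<nu> \<and>
     \<not> (\<exists>\<mu> i. crystal_edge c e \<mu> i \<nu>)"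

end

theory Submission
  imports Defs
begin
declare reduce_word.simps[simp del]
lemma sorted_last_ge: "sorted xs \<Longrightarrow> y \<in> set xs \<Longrightarrow> y \<le> last xs"
proof (induction xs)
  case Nil then show ?case by simp
next
  case (Cons a xs)
  then show ?case by (cases "xs = []") auto
qed

lemma last_sorted_list_of_set:
  fixes S :: "'a::linorder set"
  assumes "finite S" "S \<noteq> {}"
  shows "last (sorted_list_of_set S) = Max S"
proof -
  let ?xs = "sorted_list_of_set S"
  have ne: "?xs \<noteq> []" using assms by simp
  have "last ?xs \<in> S" using ne assms by (metis last_in_set set_sorted_list_of_set)
  moreover have "\<forall>y\<in>S. y \<le> last ?xs"
    using assms sorted_last_ge sorted_sorted_list_of_set set_sorted_list_of_set by metis
  ultimately show ?thesis using assms by (metis Max_eqI)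
qed

lemma cancel1_set: "cancel1 w = Some w' \<Longrightarrow> set w' \<subseteq> set w"
  by (induction w arbitrary: w' rule: cancel1.induct) (auto split: if_splits)

lemma cancel1_allA: "\<forall>x\<in>set w. snd x \<Longrightarrow> cancel1 w = None"
  by (induction w rule: cancel1.induct) auto

lemma reduce_word_allA: "\<forall>x\<in>set w. snd x \<Longrightarrow> reduce_word w = w"
  by (subst reduce_word.simps) (simp add: cancel1_allA)

lemma reduce_word_set: "set (reduce_word w) \<subseteq> set w"
proof (induction w rule: reduce_word.induct)
  case (1 w)
  show ?case
  proof (cases "cancel1 w")
    case None
    then show ?thesis by (subst reduce_word.simps) simp
  next
    case (Some w')
    have "reduce_word w = reduce_word w'" using Some by (subst reduce_word.simps) simp
    then show ?thesis using 1[OF Some] cancel1_set[OF Some] by simp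
  qed
qed

lemma mem_sorted_list_of_set: "x \<in> set (sorted_list_of_set S) \<Longrightarrow> x \<in> S"
  by (cases "finite S") auto

lemma good_addable_mem:
  assumes "good_addable c e \<mu> i = Some g"
  shows "addable \<mu> g \<and> residue c e g = int i"
proof -
  let ?r = "reduce_word (i_word c e \<mu> i)"
  have ne: "filter snd ?r \<noteq> []" and g: "g = fst (last (filter snd ?r))"
    using assms unfolding good_addable_def Let_def by (auto split: if_splits simp del: reduce_word.simps)
  have "last (filter snd ?r) \<in> set (filter snd ?r)" using ne by (rule last_in_set)
  then have "(g, True) \<in> set ?r"
  proof -
    assume h: "last (filter snd ?r) \<in> set (filter snd ?r)"
    obtain x b where xb: "last (filter snd ?r) = (x, b)" by fastforce
    show ?thesis using h xb g by auto
  qed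
  hence "(g, True) \<in> set (i_word c e \<mu> i)" using reduce_word_set by blast
  then show ?thesis unfolding i_word_def by (auto dest!: mem_sorted_list_of_set)
qed

definition Sset :: "int \<times> int \<Rightarrow> nat \<Rightarrow> bipartition \<Rightarrow> nat \<Rightarrow> (int \<times> int \<times> node \<times> bool) set" where
  "Sset c e \<mu> i = {(content c \<gamma>, - int (snd (snd \<gamma>)), \<gamma>, addable \<mu> \<gamma>) | \<gamma>.
            (addable \<mu> \<gamma> \<or> removable \<mu> \<gamma>) \<and> residue c e \<gamma> = int i}"

lemma good_addable_max:
  assumes fin: "finite (Sset c e \<mu> i)" and ne: "Sset c e \<mu> i \<noteq> {}"
    and noR: "\<And>\<gamma>. removable \<mu> \<gamma> \<Longrightarrow> residue c e \<gamma> \<noteq> int i"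
  shows "good_addable c e \<mu> i = Some (fst (snd (snd (Max (Sset c e \<mu> i)))))"
proof -
  let ?S = "Sset c e \<mu> i"
  let ?f = "\<lambda>(k::int, nj::int, \<gamma>::node, isA::bool). (\<gamma>, isA)"
  let ?xs = "sorted_list_of_set ?S"
  have iw: "i_word c e \<mu> i = map ?f ?xs" unfolding i_word_def Sset_def by simp
  have allA: "\<forall>x\<in>?S. snd (snd (snd x))" unfolding Sset_def using noR by auto
  have "\<forall>x\<in>set (i_word c e \<mu> i). snd x" unfolding iw using allA fin by auto
  hence r: "reduce_word (i_word c e \<mu> i) = i_word c e \<mu> i" by (rule reduce_word_allA)
  have fl: "filter snd (i_word c e \<mu> i) = i_word c e \<mu> i"
    using \<open>\<forall>x\<in>set (i_word c e \<mu> i). snd x\<close> by simp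
  have xsne: "?xs \<noteq> []" using fin ne by simp
  have "last (i_word c e \<mu> i) = ?f (Max ?S)"
    unfolding iw using xsne last_sorted_list_of_set[OF fin ne] by (simp add: last_map)
  then show ?thesis unfolding good_addable_def Let_def r fl using xsne iw
    by (cases "Max ?S") auto
qed

lemma nodes_mem: "(a, b, j) \<in> nodes \<mu> \<longleftrightarrow>
   (j = 1 \<and> (a, b) \<in> diagram (fst \<mu>)) \<or> (j = 2 \<and> (a, b) \<in> diagram (snd \<mu>))"
  by (auto simp: nodes_def)

lemma diagram_closed:
  assumes "is_partition l" "(a, b) \<in> diagram l" "1 \<le> a'" "a' \<le> a" "1 \<le> b'" "b' \<le> b"
  shows "(a', b') \<in> diagram l"
proof -
  have s: "sorted_wrt (\<ge>) l" using assms(1) by (simp add: is_partition_def)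
  have a: "1 \<le> a" "a \<le> length l" "b \<le> l ! (a - 1)" using assms(2) by (auto simp: diagram_def)
  have "l ! (a - 1) \<le> l ! (a' - 1)"
  proof (cases "a' = a")
    case False
    then have "a' - 1 < a - 1" using assms a by linarith
    then show ?thesis using s a by (auto simp: sorted_wrt_iff_nth_less)
  qed simp
  then show ?thesis using a assms by (auto simp: diagram_def)
qed

lemma nodes_closed:
  assumes "is_bipartition \<nu>" "(a, b, j) \<in> nodes \<nu>" "1 \<le> a'" "a' \<le> a" "1 \<le> b'" "b' \<le> b"
  shows "(a', b', j) \<in> nodes \<nu>"
  using assms diagram_closed[of "fst \<nu>"] diagram_closed[of "snd \<nu>"]
  by (auto simp: nodes_mem is_bipartition_def)

lemma nodes_pos: "(a, b, j) \<in> nodes \<nu> \<Longrightarrow> 1 \<le> a \<and> 1 \<le> b \<and> (j = 1 \<or> j = 2)"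
  by (auto simp: nodes_mem diagram_def)

definition col :: "nat \<Rightarrow> node set" where
  "col k = {(a, 1, 2) | a. 1 \<le> a \<and> a \<le> k}"

lemma diagram_rep: "diagram (replicate k 1) = {(a, 1) | a. 1 \<le> a \<and> a \<le> k}"
  by (auto simp: diagram_def)

lemma nodes_rep: "nodes ([], replicate k 1) = col k"
  by (auto simp: nodes_def diagram_rep col_def diagram_def)

lemma nodes_rep1: "nodes ([1], replicate k 1) = insert (1,1,1) (col k)"
  by (auto simp: nodes_def diagram_rep col_def diagram_def)

lemma nth_rep2: "2 \<le> a \<Longrightarrow> a \<le> Suc k \<Longrightarrow> (2 # replicate k (1::nat)) ! (a - 1) = 1"
  by (cases a) (auto simp: nth_Cons split: nat.split)

lemma diagram_rep2: "diagram (2 # replicate k 1) = insert (1,2) {(a, 1) | a. 1 \<le> a \<and> a \<le> Suc k}"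
proof (rule set_eqI)
  fix x :: "nat \<times> nat"
  obtain a b where x: "x = (a, b)" by fastforce
  show "x \<in> diagram (2 # replicate k 1) \<longleftrightarrow> x \<in> insert (1,2) {(a, 1) | a. 1 \<le> a \<and> a \<le> Suc k}"
  proof (cases "a \<le> 1")
    case True
    then show ?thesis unfolding x diagram_def by auto
  next
    case False
    then show ?thesis unfolding x diagram_def using nth_rep2[of a k] by auto
  qed
qed

lemma nodes_rep2: "nodes ([], 2 # replicate k 1) = insert (1,2,2) (col (Suc k))"
  unfolding nodes_def fst_conv snd_conv diagram_rep2 by (auto simp: col_def diagram_def)

lemma col_Suc: "col (Suc k) = insert (Suc k, 1, 2) (col k)"
  by (auto simp: col_def)

lemma bip_rep: "is_bipartition ([], replicate k 1)"
  by (auto simp: is_bipartition_def is_partition_def sorted_wrt_iff_nth_less)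
lemma bip_rep1: "is_bipartition ([1], replicate k 1)"
  by (auto simp: is_bipartition_def is_partition_def sorted_wrt_iff_nth_less)
lemma bip_rep2: "is_bipartition ([], 2 # replicate k 1)"
proof -
  have "sorted_wrt (\<ge>) (replicate k (1::nat))" by (auto simp: sorted_wrt_iff_nth_less)
  then show ?thesis by (auto simp: is_bipartition_def is_partition_def)
qed

lemma col_mem: "(x, y, z) \<in> col k \<longleftrightarrow> y = 1 \<and> z = 2 \<and> 1 \<le> x \<and> x \<le> k"
  by (auto simp: col_def)

lemma addable_col:
  assumes nm: "nodes \<mu> = col k"
  shows "addable \<mu> \<gamma> \<longleftrightarrow> \<gamma> = (1,1,1) \<or> \<gamma> = (Suc k,1,2) \<or> (k \<ge> 1 \<and> \<gamma> = (1,2,2))"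
proof
  assume "addable \<mu> \<gamma>"
  then obtain \<nu> where nin: "\<gamma> \<notin> col k" and bip: "is_bipartition \<nu>"
    and nn: "nodes \<nu> = col k \<union> {\<gamma>}"
    unfolding addable_def nm by blast
  obtain a b j where g: "\<gamma> = (a, b, j)" by (cases \<gamma>) auto
  have gin: "(a, b, j) \<in> nodes \<nu>" using nn g by simp
  have pos: "1 \<le> a" "1 \<le> b" "j = 1 \<or> j = 2" using nodes_pos[OF gin] by auto
  have other: "\<And>x y z. (x, y, z) \<in> nodes \<nu> \<Longrightarrow> (x, y, z) \<noteq> (a, b, j) \<Longrightarrow> (x, y, z) \<in> col k"
    using nn g by auto
  have cl: "\<And>x y. 1 \<le> x \<Longrightarrow> x \<le> a \<Longrightarrow> 1 \<le> y \<Longrightarrow> y \<le> b \<Longrightarrow> (x, y, j) \<in> nodes \<nu>"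
    using nodes_closed[OF bip gin] by blast
  show "\<gamma> = (1,1,1) \<or> \<gamma> = (Suc k,1,2) \<or> (k \<ge> 1 \<and> \<gamma> = (1,2,2))"
  proof (cases "j = 1")
    case True
    have "a = 1"
    proof (rule ccontr)
      assume "a \<noteq> 1"
      then have "(a - 1, b, j) \<in> col k" using other[OF cl[of "a-1" b]] pos by auto
      then show False using True by (simp add: col_mem)
    qed
    moreover have "b = 1"
    proof (rule ccontr)
      assume "b \<noteq> 1"
      then have "(a, b - 1, j) \<in> col k" using other[OF cl[of a "b-1"]] pos by auto
      then show False using True by (simp add: col_mem)
    qed
    ultimately show ?thesis using g True by simp
  next
    case False
    then have j2: "j = 2" using pos by simp
    show ?thesis
    proof (cases "b = 1")
      case True
      then have ak: "a > k" using nin g j2 pos by (auto simp: col_mem)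
      have "a = Suc k"
      proof (rule ccontr)
        assume "a \<noteq> Suc k"
        then have "(a - 1, b, j) \<in> col k" using other[OF cl[of "a-1" b]] pos ak by auto
        then show False unfolding col_mem using ak \<open>a \<noteq> Suc k\<close> by linarith
      qed
      then show ?thesis using g True j2 by simp
    next
      case False
      have "(a, b - 1, j) \<in> col k" using other[OF cl[of a "b-1"]] pos False by auto
      then have b2: "b = 2" and ak: "a \<le> k" using pos False by (auto simp: col_mem)
      have "a = 1"
      proof (rule ccontr)
        assume "a \<noteq> 1"
        then have "(1, b, j) \<in> col k" using other[OF cl[of 1 b]] pos by auto
        then show False using b2 by (simp add: col_mem)
      qed
      then show ?thesis using g b2 j2 ak by simp
    qed
  qed
next
  assume h: "\<gamma> = (1,1,1) \<or> \<gamma> = (Suc k,1,2) \<or> (k \<ge> 1 \<and> \<gamma> = (1,2,2))"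
  show "addable \<mu> \<gamma>"
    unfolding addable_def nm
  proof -
    consider "\<gamma> = (1,1,1)" | "\<gamma> = (Suc k,1,2)" | "k \<ge> 1" "\<gamma> = (1,2,2)" using h by blast
    then show "\<gamma> \<notin> col k \<and> (\<exists>\<nu>. is_bipartition \<nu> \<and> nodes \<nu> = col k \<union> {\<gamma>})"
    proof cases
      case 1
      then show ?thesis using bip_rep1[of k] nodes_rep1[of k] by (auto simp: col_mem)
    next
      case 2
      then show ?thesis using bip_rep[of "Suc k"] nodes_rep[of "Suc k"] col_Suc[of k]
        by (auto simp: col_mem)
    next
      case 3
      then have "Suc (k - 1) = k" by simp
      then show ?thesis using 3 bip_rep2[of "k - 1"] nodes_rep2[of "k - 1"]
        by (auto simp: col_mem)
    qed
  qed
qed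

lemma col_pred: "k \<ge> 1 \<Longrightarrow> col (k - 1) = col k - {(k, 1, 2)}"
  by (auto simp: col_def)

lemma removable_col:
  assumes nm: "nodes \<mu> = col k"
  shows "removable \<mu> \<gamma> \<longleftrightarrow> k \<ge> 1 \<and> \<gamma> = (k,1,2)"
proof
  assume "removable \<mu> \<gamma>"
  then obtain \<nu> where gin: "\<gamma> \<in> col k" and bip: "is_bipartition \<nu>"
    and nn: "nodes \<nu> = col k - {\<gamma>}"
    unfolding removable_def nm by blast
  obtain a where g: "\<gamma> = (a, 1, 2)" and a: "1 \<le> a" "a \<le> k" using gin by (auto simp: col_def)
  have "a = k"
  proof (rule ccontr)
    assume "a \<noteq> k"
    then have "(Suc a, 1, 2) \<in> nodes \<nu>" using nn g a by (auto simp: col_mem)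
    then have "(a, 1, 2) \<in> nodes \<nu>" using nodes_closed[OF bip] a by fastforce
    then show False using nn g by simp
  qed
  then show "k \<ge> 1 \<and> \<gamma> = (k,1,2)" using g a by simp
next
  assume h: "k \<ge> 1 \<and> \<gamma> = (k,1,2)"
  then show "removable \<mu> \<gamma>"
    unfolding removable_def nm using bip_rep[of "k-1"] nodes_rep[of "k-1"] col_pred[of k]
    by (auto simp: col_mem)
qed

lemma odd_dvd_double:
  fixes e q x :: int
  assumes "e = 2 * q + 1"
  shows "e dvd 2 * x \<longleftrightarrow> e dvd x"
proof
  assume h: "e dvd 2 * x"
  have "x = (q + 1) * (2 * x) - e * x" using assms by (simp add: algebra_simps)
  moreover have "e dvd (q + 1) * (2 * x) - e * x" using h by (simp add: dvd_diff)
  ultimately show "e dvd x" by simp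
qed simp

lemma arith_main:
  fixes e q m t :: int
  assumes e: "e = 2 * q + 1" and q: "q \<ge> 1" and m: "m \<ge> 1" and t: "t = 0 \<or> t = 1"
  shows "(((t - q) mod e = (1 - m) mod e \<longrightarrow> t - q < 1 - m) \<and>
           \<not> (m \<ge> 2 \<and> 1 mod e = (1 - m) mod e))
         \<longleftrightarrow> \<not> (e dvd 2 * m + t \<or> e dvd 2 * m + t - 1)"
proof -
  have A: "(t - q) mod e = (1 - m) mod e \<longleftrightarrow> e dvd 2 * m + 2 * t - 1"
  proof -
    have "(t - q) mod e = (1 - m) mod e \<longleftrightarrow> e dvd (t - q) - (1 - m)"
      by (rule mod_eq_dvd_iff)
    also have "\<dots> \<longleftrightarrow> e dvd 2 * ((t - q) - (1 - m))" using odd_dvd_double[OF e, of "(t - q) - (1 - m)"] by argo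
    also have "2 * ((t - q) - (1 - m)) = (2 * m + 2 * t - 1) - e" using e by simp
    also have "e dvd (2 * m + 2 * t - 1) - e \<longleftrightarrow> e dvd 2 * m + 2 * t - 1"
      by (metis dvd_diff dvd_refl diff_add_cancel dvd_add)
    finally show ?thesis .
  qed
  have B: "1 mod e = (1 - m) mod e \<longleftrightarrow> e dvd 2 * m"
  proof -
    have "1 mod e = (1 - m) mod e \<longleftrightarrow> e dvd 1 - (1 - m)" by (rule mod_eq_dvd_iff)
    then show ?thesis using odd_dvd_double[OF e, of m] by simp
  qed
  have le: "\<And>y. e dvd y \<Longrightarrow> y > 0 \<Longrightarrow> e \<le> y" by (simp add: zdvd_imp_le)
  show ?thesis
  proof (cases "t = 0")
    case True
    have c1: "e dvd 2 * m - 1 \<Longrightarrow> \<not> (0 - q < 1 - m)" using le[of "2*m - 1"] m e by linarith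
    have c2: "e dvd 2 * m \<Longrightarrow> m \<ge> 2" using le[of "2*m"] m e q by linarith
    show ?thesis unfolding A B using True c1 c2 by auto
  next
    case False
    then have t1: "t = 1" using t by simp
    have c1: "e dvd 2 * m + 1 \<Longrightarrow> \<not> (1 - q < 1 - m)" using le[of "2*m + 1"] m e by linarith
    have c2: "e dvd 2 * m \<Longrightarrow> m \<ge> 2" using le[of "2*m"] m e q by linarith
    have "2 * m + 2 * t - 1 = 2 * m + 1" "2 * m + t = 2 * m + 1" "2 * m + t - 1 = 2 * m"
      using t1 by simp_all
    moreover have c1': "e dvd 2 * m + 1 \<Longrightarrow> \<not> (t - q < 1 - m)" using c1 t1 by simp
    ultimately show ?thesis unfolding A B using c1' c2 by (smt (verit))
  qed
qed

lemma good_addable_cong: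
  assumes "nodes \<mu> = nodes \<mu>2"
  shows "good_addable c e \<mu> i = good_addable c e \<mu>2 i"
proof -
  have "addable \<mu> = addable \<mu>2" by (rule ext) (simp add: addable_def assms)
  moreover have "removable \<mu> = removable \<mu>2" by (rule ext) (simp add: removable_def assms)
  ultimately show ?thesis unfolding good_addable_def i_word_def by simp
qed

lemma good_at_col:
  fixes c :: "int \<times> int" and e k :: nat
  assumes e3: "e \<ge> 3" and nm: "nodes \<mu> = col k"
  defines "\<gamma> \<equiv> (Suc k, 1::nat, 2::nat)"
  defines "r0 \<equiv> residue c e \<gamma>"
  shows "good_addable c e \<mu> (nat r0) = Some \<gamma> \<longleftrightarrow>
    ((residue c e (1,1,1) = r0 \<longrightarrow> content c (1,1,1) < content c \<gamma>) \<and>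
     \<not> (k \<ge> 1 \<and> residue c e (1,2,2) = r0))"
proof -
  let ?i0 = "nat r0"
  have r0pos: "r0 \<ge> 0" unfolding r0_def residue_def using e3 by simp
  hence ir: "int ?i0 = r0" by simp
  define f where "f x = (content c x, - int (snd (snd x)), x, addable \<mu> x)" for x
  let ?S = "Sset c e \<mu> ?i0"
  have memS: "y \<in> ?S \<longleftrightarrow> (\<exists>x. y = f x \<and> (addable \<mu> x \<or> removable \<mu> x) \<and> residue c e x = r0)" for y
    unfolding Sset_def f_def ir by blast
  have noR: "residue c e x \<noteq> int ?i0" if "removable \<mu> x" for x
  proof
    assume h: "residue c e x = int ?i0"
    have x: "k \<ge> 1" "x = (k, 1, 2)" using that removable_col[OF nm] by auto
    have "content c x = content c \<gamma> + 1" using x unfolding \<gamma>_def content_def by simp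
    then have "(content c \<gamma> + 1) mod int e = content c \<gamma> mod int e"
      using h ir unfolding r0_def residue_def by simp
    then have "int e dvd (content c \<gamma> + 1) - content c \<gamma>" by (simp add: mod_eq_dvd_iff)
    then have "int e dvd 1" by simp
    then show False using e3 by simp
  qed
  have fin: "finite ?S"
  proof (rule finite_subset)
    show "?S \<subseteq> f ` {(1,1,1), \<gamma>, (1,2,2), (k,1,2)}"
    proof
      fix y assume "y \<in> ?S"
      then obtain x where x: "y = f x" "addable \<mu> x \<or> removable \<mu> x" using memS by blast
      then have "x \<in> {(1,1,1), \<gamma>, (1,2,2), (k,1,2)}"
        using addable_col[OF nm, of x] removable_col[OF nm, of x] unfolding \<gamma>_def by auto
      then show "y \<in> f ` {(1,1,1), \<gamma>, (1,2,2), (k,1,2)}" using x by blast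
    qed
  qed simp
  have adg: "addable \<mu> \<gamma>" using addable_col[OF nm] \<gamma>_def by simp
  have fgS: "f \<gamma> \<in> ?S" unfolding memS using adg r0_def by blast
  hence ne: "?S \<noteq> {}" by blast
  have ga: "good_addable c e \<mu> ?i0 = Some (fst (snd (snd (Max ?S))))"
    by (rule good_addable_max[OF fin ne noR])
  have fst3: "fst (snd (snd (f x))) = x" for x by (simp add: f_def)
  have step1: "good_addable c e \<mu> ?i0 = Some \<gamma> \<longleftrightarrow> (\<forall>y\<in>?S. y \<le> f \<gamma>)"
  proof
    assume "good_addable c e \<mu> ?i0 = Some \<gamma>"
    then have g: "fst (snd (snd (Max ?S))) = \<gamma>" using ga by simp
    obtain x where "Max ?S = f x" using Max_in[OF fin ne] memS by blast
    then have "Max ?S = f \<gamma>" using g fst3 by simp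
    then show "\<forall>y\<in>?S. y \<le> f \<gamma>" using Max_ge[OF fin] by metis
  next
    assume "\<forall>y\<in>?S. y \<le> f \<gamma>"
    then have "Max ?S = f \<gamma>" using Max_eqI[OF fin] fgS by metis
    then show "good_addable c e \<mu> ?i0 = Some \<gamma>" using ga fst3 by simp
  qed
  have step2: "(\<forall>y\<in>?S. y \<le> f \<gamma>) \<longleftrightarrow> (\<forall>x. addable \<mu> x \<and> residue c e x = r0 \<longrightarrow> f x \<le> f \<gamma>)"
  proof
    assume H: "\<forall>y\<in>?S. y \<le> f \<gamma>"
    show "\<forall>x. addable \<mu> x \<and> residue c e x = r0 \<longrightarrow> f x \<le> f \<gamma>"
    proof (intro allI impI)
      fix x assume "addable \<mu> x \<and> residue c e x = r0"
      then have "f x \<in> ?S" using memS by blast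
      then show "f x \<le> f \<gamma>" using H by blast
    qed
  next
    assume H: "\<forall>x. addable \<mu> x \<and> residue c e x = r0 \<longrightarrow> f x \<le> f \<gamma>"
    show "\<forall>y\<in>?S. y \<le> f \<gamma>"
    proof
      fix y assume "y \<in> ?S"
      then obtain x where x: "y = f x" "addable \<mu> x \<or> removable \<mu> x" "residue c e x = r0"
        using memS by blast
      then have "addable \<mu> x" using noR ir by metis
      then show "y \<le> f \<gamma>" using H x by blast
    qed
  qed
  have f1: "f (1,1,1) \<le> f \<gamma> \<longleftrightarrow> content c (1,1,1) < content c \<gamma>"
    unfolding f_def \<gamma>_def by auto
  have f2: "\<not> f (1,2,2) \<le> f \<gamma>" if "k \<ge> 1"
    using that unfolding f_def \<gamma>_def content_def by auto
  have step3: "(\<forall>x. addable \<mu> x \<and> residue c e x = r0 \<longrightarrow> f x \<le> f \<gamma>) \<longleftrightarrow>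
    ((residue c e (1,1,1) = r0 \<longrightarrow> content c (1,1,1) < content c \<gamma>) \<and>
     \<not> (k \<ge> 1 \<and> residue c e (1,2,2) = r0))"
    unfolding addable_col[OF nm] using f1 f2 \<gamma>_def by auto
  show ?thesis using step1 step2 step3 by simp
qed

lemma edge_col:
  fixes c :: "int \<times> int" and e m :: nat
  assumes e3: "e \<ge> 3"
  shows "(\<exists>\<mu> i. crystal_edge c e \<mu> i ([], replicate m 1)) \<longleftrightarrow>
    (m \<ge> 1 \<and> good_addable c e ([], replicate (m - 1) 1) (nat (residue c e (m,1,2))) = Some (m,1,2))"
proof
  assume "\<exists>\<mu> i. crystal_edge c e \<mu> i ([], replicate m 1)"
  then obtain \<mu> i \<gamma> where bip: "is_bipartition \<mu>" and ie: "i < e"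
    and ga: "good_addable c e \<mu> i = Some \<gamma>"
    and nn: "nodes ([], replicate m 1) = nodes \<mu> \<union> {\<gamma>}"
    unfolding crystal_edge_def by blast
  have mem: "addable \<mu> \<gamma>" "residue c e \<gamma> = int i" using good_addable_mem[OF ga] by auto
  have gn: "\<gamma> \<notin> nodes \<mu>" using mem(1) unfolding addable_def by blast
  have nm: "nodes \<mu> = nodes ([], replicate m 1) - {\<gamma>}" using nn gn by auto
  have "\<gamma> \<in> nodes ([], replicate m 1)" using nn by auto
  then have "removable ([], replicate m 1) \<gamma>"
    unfolding removable_def using nm bip by blast
  then have m1: "m \<ge> 1" and g: "\<gamma> = (m, 1, 2)" using removable_col[OF nodes_rep] by auto
  have "nodes \<mu> = col m - {(m,1,2)}" using nm g nodes_rep[of m] by simp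
  also have "\<dots> = nodes ([], replicate (m - 1) 1)" using col_pred[OF m1] nodes_rep by simp
  finally have "good_addable c e \<mu> i = good_addable c e ([], replicate (m - 1) 1) i"
    by (rule good_addable_cong)
  moreover have "i = nat (residue c e (m,1,2))" using mem(2) g by simp
  ultimately show "m \<ge> 1 \<and> good_addable c e ([], replicate (m - 1) 1) (nat (residue c e (m,1,2))) = Some (m,1,2)"
    using ga g m1 by simp
next
  assume h: "m \<ge> 1 \<and> good_addable c e ([], replicate (m - 1) 1) (nat (residue c e (m,1,2))) = Some (m,1,2)"
  have lt: "nat (residue c e (m,1,2)) < e" unfolding residue_def using e3
    by (simp add: nat_less_iff)
  have "Suc (m - 1) = m" using h by simp
  then have "nodes ([], replicate m 1) = nodes ([], replicate (m - 1) 1) \<union> {(m,1,2)}"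
    using nodes_rep[of m] nodes_rep[of "m-1"] col_Suc[of "m-1"] by auto
  then have "crystal_edge c e ([], replicate (m - 1) 1) (nat (residue c e (m,1,2))) ([], replicate m 1)"
    unfolding crystal_edge_def using bip_rep lt h by blast
  then show "\<exists>\<mu> i. crystal_edge c e \<mu> i ([], replicate m 1)" by blast
qed

theorem proposition7p5:
  fixes e m t :: nat
  assumes "e \<ge> 3" and "odd e" and "t \<in> {0, 1}"
  shows "highest_weight (int t + (1 - int e) div 2, 0) e ([], replicate m 1)
         \<longleftrightarrow> (int e dvd 2 * int m + int t \<or> int e dvd 2 * int m + int t - 1)"
proof -
  let ?c = "(int t + (1 - int e) div 2, 0::int)"
  have hw: "highest_weight ?c e ([], replicate m 1) \<longleftrightarrow>
      \<not> (\<exists>\<mu> i. crystal_edge ?c e \<mu> i ([], replicate m 1))"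
    unfolding highest_weight_def using bip_rep by simp
  show ?thesis
  proof (cases "m = 0")
    case True
    have "int e dvd 2 * int m + int t \<or> int e dvd 2 * int m + int t - 1"
      using True assms(3) by auto
    then show ?thesis unfolding hw edge_col[OF assms(1)] using True by simp
  next
    case False
    then have m1: "m \<ge> 1" by simp
    obtain q where q: "e = 2 * q + 1" using assms(2) oddE by blast
    have q1: "int q \<ge> 1" using q assms(1) by simp
    have c1: "(1 - int e) div 2 = - int q" using q by simp
    have sk: "Suc (m - 1) = m" using m1 by simp
    have G: "good_addable ?c e ([], replicate (m - 1) 1) (nat (residue ?c e (m,1,2))) = Some (m,1,2)
      \<longleftrightarrow> ((residue ?c e (1,1,1) = residue ?c e (m,1,2) \<longrightarrow> content ?c (1,1,1) < content ?c (m,1,2)) \<and>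
     \<not> (m - 1 \<ge> 1 \<and> residue ?c e (1,2,2) = residue ?c e (m,1,2)))"
      using good_at_col[OF assms(1) nodes_rep[of "m-1"], of ?c] unfolding sk .
    have A: "((int t - int q) mod int e = (1 - int m) mod int e \<longrightarrow> int t - int q < 1 - int m) \<and>
           \<not> (int m \<ge> 2 \<and> 1 mod int e = (1 - int m) mod int e)
         \<longleftrightarrow> \<not> (int e dvd 2 * int m + int t \<or> int e dvd 2 * int m + int t - 1)"
      by (rule arith_main) (use q q1 m1 assms(3) in auto)
    have eqk: "(m - 1 \<ge> 1) \<longleftrightarrow> (int m \<ge> 2)" by auto
    show ?thesis unfolding hw edge_col[OF assms(1)] G eqk using m1 A
      by (simp add: residue_def content_def c1)
  qed
qed
end
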